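(* Let $r\ge 3$ be an integer, let $\varphi$ be an instance of Exact $r$-SAT, and let $G(\varphi)$ be the graph constructed from $\varphi$ as described in the context. If $\mathrm{wcol}_r(G(\varphi)) \leq 2r-1$, then $\varphi$ has a satisfying assignment.
   Context: Exact $r$-SAT: given a CNF formula $\varphi$ with clauses $c_1,\dots,c_m$ over variables $x_1,\dots,x_n$ such that each clause contains exactly $r$ different variables, decide whether $\varphi$ is satisfiable. An $\ell$-subdivided edge between $a$ and $b$ is an induced path with $\ell$ internal vertices (subdivision vertices) joining $a$ and $b$, whose internal vertices have no other neighbors. Construction of $G(\varphi)$: for each clause $c_i$ create $2r$ vertices $u_i^1,\dots,u_i^{2r}$. For each variable $x_j$ create two vertices $v_j,v'_j$ (for the literals $x_j$ and $\overline{x}_j$) joined by an edge. For each clause $c_i$ containing literal $x_j$, add two $(r-2)$-subdivided edges from $v_j$ to each of $u_i^1,\dots,u_i^{2r}$; for each clause $c_i$ containing $\overline{x}_j$, add two $(r-2)$-subdivided edges from $v'_j$ to each of $u_i^1,\dots,u_i^{2r}$. Weak coloring numbers: for a graph $G=(V,E)$ and a total order $\sigma$ of $V$, a vertex $v\neq u$ is weakly $r$-reachable from $u$ if $u <_\sigma v$ and there is a $u$–$v$ path $P$ of length at most $r$ all of whose vertices other than $u,v$ precede $v$ in $\sigma$; $\mathrm{wreach}_r(u,G_\sigma)$ is the set of such $v$, and $\mathrm{wcol}_r(G)=\min_\sigma\max_u|\mathrm{wreach}_r(u,G_\sigma)|$ over all total orders $\sigma$ of $V$. *)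

theory Defs
  imports Main
begin

text \<open>A literal is a pair (j, b): (j, True) is x_j, (j, False) is the negation of x_j.
  Variables are 0..n-1. A formula is a list of clauses, each a set of literals.\<close>

type_synonym literal = "nat \<times> bool"
type_synonym clause = "literal set"

definition exact_r_cnf :: "nat \<Rightarrow> nat \<Rightarrow> clause list \<Rightarrow> bool" where
  "exact_r_cnf r n cs \<longleftrightarrow>
     (\<forall>c \<in> set cs. finite c \<and> card c = r \<and> card (fst ` c) = r \<and> fst ` c \<subseteq> {..<n})"

definition satisfiable :: "clause list \<Rightarrow> bool" where
  "satisfiable cs \<longleftrightarrow> (\<exists>a :: nat \<Rightarrow> bool. \<forall>c \<in> set cs. \<exists>(j, b) \<in> c. a j = b)"

text \<open>A simple graph is given by a vertex set V and a symmetric adjacency predicate E.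
  A total order is a strict linear order R on V (R \<subseteq> V \<times> V).\<close>

definition is_path :: "('a \<Rightarrow> 'a \<Rightarrow> bool) \<Rightarrow> 'a list \<Rightarrow> bool" where
  "is_path E ps \<longleftrightarrow> ps \<noteq> [] \<and> distinct ps \<and> (\<forall>i < length ps - 1. E (ps ! i) (ps ! Suc i))"

definition wreach :: "'a set \<Rightarrow> ('a \<Rightarrow> 'a \<Rightarrow> bool) \<Rightarrow> ('a \<times> 'a) set \<Rightarrow> nat \<Rightarrow> 'a \<Rightarrow> 'a set" where
  "wreach V E R r u = {v \<in> V. v \<noteq> u \<and> (u, v) \<in> R \<and>
      (\<exists>ps. is_path E ps \<and> set ps \<subseteq> V \<and> hd ps = u \<and> last ps = v \<and> length ps \<le> r + 1 \<and>
            (\<forall>w \<in> set ps. w \<noteq> u \<and> w \<noteq> v \<longrightarrow> (w, v) \<in> R))}"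

definition total_orders_on :: "'a set \<Rightarrow> ('a \<times> 'a) set set" where
  "total_orders_on V = {R. R \<subseteq> V \<times> V \<and> strict_linear_order_on V R}"

definition wcol :: "'a set \<Rightarrow> ('a \<Rightarrow> 'a \<Rightarrow> bool) \<Rightarrow> nat \<Rightarrow> nat" where
  "wcol V E r = Min ((\<lambda>R. Max (insert 0 ((\<lambda>u. card (wreach V E R r u)) ` V))) ` total_orders_on V)"

text \<open>U i k = u_i^k (clause i, 1 \<le> k \<le> 2r); Lit j True = v_j, Lit j False = v'_j;
  Sub i j b k c p = p-th subdivision vertex (1 \<le> p \<le> r-2) of copy c (c < 2) of the
  subdivided edge between the vertex of literal (j,b) and u_i^k.\<close>

datatype vtx = U nat nat | Lit nat bool | Sub nat nat bool nat nat nat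

definition sv :: "nat \<Rightarrow> nat \<Rightarrow> nat \<Rightarrow> bool \<Rightarrow> nat \<Rightarrow> nat \<Rightarrow> nat \<Rightarrow> vtx" where
  "sv r i j b k c p = (if p = 0 then Lit j b else if p = r - 1 then U i k else Sub i j b k c p)"

definition G_verts :: "nat \<Rightarrow> nat \<Rightarrow> clause list \<Rightarrow> vtx set" where
  "G_verts r n cs =
     {U i k | i k. i < length cs \<and> 1 \<le> k \<and> k \<le> 2 * r}
   \<union> {Lit j b | j b. j < n}
   \<union> {Sub i j b k c p | i j b k c p. i < length cs \<and> (j, b) \<in> cs ! i \<and> 1 \<le> k \<and> k \<le> 2 * r
                                  \<and> c < 2 \<and> 1 \<le> p \<and> p \<le> r - 2}"

definition G_edges :: "nat \<Rightarrow> nat \<Rightarrow> clause list \<Rightarrow> (vtx \<times> vtx) set" where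
  "G_edges r n cs =
     {(Lit j True, Lit j False) | j. j < n}
   \<union> {(sv r i j b k c p, sv r i j b k c (Suc p)) | i j b k c p.
        i < length cs \<and> (j, b) \<in> cs ! i \<and> 1 \<le> k \<and> k \<le> 2 * r \<and> c < 2 \<and> p < r - 1}"

definition G_adj :: "nat \<Rightarrow> nat \<Rightarrow> clause list \<Rightarrow> vtx \<Rightarrow> vtx \<Rightarrow> bool" where
  "G_adj r n cs x y \<longleftrightarrow> (x, y) \<in> G_edges r n cs \<or> (y, x) \<in> G_edges r n cs"

end

theory Submission
  imports Defs
begin

lemma is_path_take:
  assumes "is_path E ps" "0 < m"
  shows "is_path E (take m ps)"
  using assms unfolding is_path_def by (auto simp: distinct_take)

lemma is_path_rev:
  assumes "is_path E ps" "\<And>x y. E x y \<Longrightarrow> E y x"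
  shows "is_path E (rev ps)"
  unfolding is_path_def
proof (intro conjI allI impI)
  show "rev ps \<noteq> []" "distinct (rev ps)" using assms(1) by (auto simp: is_path_def)
  fix q assume q: "q < length (rev ps) - 1"
  let ?L = "length ps"
  have e: "E (ps ! (?L - 2 - q)) (ps ! Suc (?L - 2 - q))"
    using assms(1) q unfolding is_path_def by auto
  have "Suc (?L - 2 - q) = ?L - Suc q" using q by simp
  moreover have "?L - 2 - q = ?L - Suc (Suc q)" by simp
  ultimately have "E (ps ! (?L - Suc (Suc q))) (ps ! (?L - Suc q))" using e by simp
  then show "E (rev ps ! q) (rev ps ! Suc q)" using q assms(2) by (simp add: rev_nth)
qed

lemma is_path_snoc:
  assumes "is_path E ps" "x \<notin> set ps" "E (last ps) x"
  shows "is_path E (ps @ [x])"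
  unfolding is_path_def
proof (intro conjI allI impI)
  show "ps @ [x] \<noteq> []" by simp
  show "distinct (ps @ [x])" using assms by (auto simp: is_path_def)
  fix q assume q: "q < length (ps @ [x]) - 1"
  show "E ((ps @ [x]) ! q) ((ps @ [x]) ! Suc q)"
  proof (cases "Suc q < length ps")
    case True then show ?thesis using assms(1) by (auto simp: is_path_def nth_append)
  next
    case False
    then have "q = length ps - 1" using q by simp
    moreover have "ps \<noteq> []" using assms(1) by (simp add: is_path_def)
    ultimately show ?thesis using assms(3) by (simp add: nth_append last_conv_nth)
  qed
qed

lemma exists_max:
  assumes "finite S" "S \<noteq> {}" "S \<subseteq> V" "trans R" "total_on V R"
  shows "\<exists>v\<in>S. \<forall>x\<in>S. x \<noteq> v \<longrightarrow> (x, v) \<in> R"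
  using assms(1,2,3)
proof (induction S rule: finite_ne_induct)
  case (singleton x) then show ?case by simp
next
  case (insert x F)
  then obtain v where v: "v \<in> F" "\<forall>y\<in>F. y \<noteq> v \<longrightarrow> (y, v) \<in> R" by auto
  have xv: "x \<noteq> v" using v insert by auto
  show ?case
  proof (cases "(v, x) \<in> R")
    case True
    then show ?thesis using v assms(4) by (auto dest: transD)
  next
    case False
    then have "(x, v) \<in> R" using assms(5) insert v xv unfolding total_on_def by blast
    then show ?thesis using v by auto
  qed
qed

lemma wreach_intro:
  assumes R: "strict_linear_order_on V R"
  and p: "is_path E (u # rest)" "set (u # rest) \<subseteq> V" "length rest \<le> r"
  and v: "v \<in> set rest" "\<forall>x\<in>set rest. x \<noteq> v \<longrightarrow> (x, v) \<in> R" "(u, v) \<in> R"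
  shows "v \<in> wreach V E R r u"
proof -
  obtain idx where idx: "idx < length rest" "rest ! idx = v" using v(1) by (auto simp: in_set_conv_nth)
  define ps where "ps = u # take idx rest @ [v]"
  have ps_eq: "ps = take (idx + 2) (u # rest)"
    using idx by (simp add: ps_def take_Suc_conv_app_nth)
  have "is_path E ps" unfolding ps_eq by (rule is_path_take[OF p(1)]) simp
  moreover have "set ps \<subseteq> set (u # rest)" unfolding ps_eq by (rule set_take_subset)
  moreover have "length ps \<le> r + 1" using idx p(3) by (simp add: ps_def)
  moreover have "\<forall>w\<in>set ps. w \<noteq> u \<and> w \<noteq> v \<longrightarrow> (w, v) \<in> R"
    using v(2) by (auto simp: ps_def dest: in_set_takeD)
  moreover have "u \<noteq> v" using v(3) R by (auto simp: strict_linear_order_on_def irrefl_on_def)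
  moreover have "v \<in> V" using v(1) p(2) by auto
  moreover have "hd ps = u" "last ps = v" by (simp_all add: ps_def)
  ultimately have "\<exists>ps. is_path E ps \<and> set ps \<subseteq> V \<and> hd ps = u \<and> last ps = v \<and> length ps \<le> r + 1 \<and>
            (\<forall>w \<in> set ps. w \<noteq> u \<and> w \<noteq> v \<longrightarrow> (w, v) \<in> R)"
    using p(2) by (intro exI[of _ ps]) auto
  then show ?thesis using \<open>u \<noteq> v\<close> \<open>v \<in> V\<close> v(3) unfolding wreach_def by blast
qed


definition pth :: "nat \<Rightarrow> nat \<Rightarrow> nat \<Rightarrow> bool \<Rightarrow> nat \<Rightarrow> nat \<Rightarrow> vtx list" where
  "pth r i j b k c = map (sv r i j b k c) [0..<r]"

lemma pth_alt:
  assumes "r \<ge> 2"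
  shows "pth r i j b k c = Lit j b # map (Sub i j b k c) [1..<r-1] @ [U i k]"
proof -
  have u1: "[0..<r] = [0..<r-1] @ [r-1]" using assms by (cases r) auto
  have u2: "[0..<r-1] = 0 # [1..<r-1]" using assms by (simp add: upt_conv_Cons)
  have "map (sv r i j b k c) [1..<r-1] = map (Sub i j b k c) [1..<r-1]"
    by (rule map_cong) (auto simp: sv_def)
  then show ?thesis using assms unfolding pth_def u1 u2 by (simp add: sv_def)
qed

lemma pth_path:
  assumes "r \<ge> 3" "i < length cs" "(j, b) \<in> cs ! i" "1 \<le> k" "k \<le> 2 * r" "c < 2"
  shows "is_path (G_adj r n cs) (pth r i j b k c)"
  unfolding is_path_def
proof (intro conjI allI impI)
  show "pth r i j b k c \<noteq> []" using assms by (simp add: pth_alt)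
  show "distinct (pth r i j b k c)" using assms by (auto simp: pth_alt distinct_map inj_on_def)
  fix q assume q: "q < length (pth r i j b k c) - 1"
  then have q': "q < r - 1" by (simp add: pth_def)
  have "(sv r i j b k c q, sv r i j b k c (Suc q)) \<in> G_edges r n cs"
    unfolding G_edges_def using assms q' by blast
  then show "G_adj r n cs (pth r i j b k c ! q) (pth r i j b k c ! Suc q)"
    using q' by (simp add: pth_def G_adj_def del: upt_Suc)
qed

lemma pth_verts:
  assumes "r \<ge> 3" "i < length cs" "(j, b) \<in> cs ! i" "1 \<le> k" "k \<le> 2 * r" "c < 2" "j < n"
  shows "set (pth r i j b k c) \<subseteq> G_verts r n cs"
proof -
  have r2: "r \<ge> 2" using assms(1) by simp
  show ?thesis using assms unfolding pth_alt[OF r2] by (auto simp: G_verts_def)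
qed

fun kof :: "vtx \<Rightarrow> nat" where
  "kof (U i k) = k" | "kof (Lit j b) = 0" | "kof (Sub i j b k c p) = k"

fun jof :: "vtx \<Rightarrow> nat" where
  "jof (U i k) = 0" | "jof (Lit j b) = j" | "jof (Sub i j b k c p) = j"


theorem lemma3p9:
  fixes r n :: nat and cs :: "clause list"
  assumes "r \<ge> 3"
    and "exact_r_cnf r n cs"
    and "wcol (G_verts r n cs) (G_adj r n cs) r \<le> 2 * r - 1"
  shows "satisfiable cs"
proof (rule ccontr)
  assume unsat: "\<not> satisfiable cs"
  define V where "V = G_verts r n cs"
  define E where "E = G_adj r n cs"
  have r3: "r \<ge> 3" by (rule assms(1))
  have r2: "r \<ge> 2" using r3 by simp
  have symE: "\<And>x y. E x y \<Longrightarrow> E y x" by (auto simp: E_def G_adj_def)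
  have ex: "\<And>c. c \<in> set cs \<Longrightarrow> finite c \<and> card c = r \<and> card (fst ` c) = r \<and> fst ` c \<subseteq> {..<n}"
    using assms(2) by (auto simp: exact_r_cnf_def)
  have jn: "j < n" if "i < length cs" "(j, b) \<in> cs ! i" for i j b
  proof -
    have "cs ! i \<in> set cs" using that by simp
    then have "fst ` (cs ! i) \<subseteq> {..<n}" using ex by blast
    then show ?thesis using that by force
  qed
  have finV: "finite V"
  proof -
    have "V \<subseteq> (\<lambda>(i,k). U i k) ` ({..<length cs} \<times> {..2*r}) \<union> (\<lambda>(j,b). Lit j b) ` ({..<n} \<times> UNIV)
       \<union> (\<lambda>(i,j,b,k,c,p). Sub i j b k c p) ` ({..<length cs} \<times> {..<n} \<times> UNIV \<times> {..2*r} \<times> {..<2} \<times> {..r})"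
    proof
      fix x assume "x \<in> V"
      then show "x \<in> (\<lambda>(i,k). U i k) ` ({..<length cs} \<times> {..2*r}) \<union> (\<lambda>(j,b). Lit j b) ` ({..<n} \<times> UNIV)
       \<union> (\<lambda>(i,j,b,k,c,p). Sub i j b k c p) ` ({..<length cs} \<times> {..<n} \<times> UNIV \<times> {..2*r} \<times> {..<2} \<times> {..r})"
        unfolding V_def G_verts_def
      proof (elim UnE CollectE exE conjE)
        fix i k assume "x = U i k" "i < length cs" "k \<le> 2 * r"
        then show ?thesis by (intro UnI1 image_eqI[where x="(i,k)"]) auto
      next
        fix j b assume "x = Lit j b" "j < n"
        then show ?thesis by (intro UnI1 UnI2 image_eqI[where x="(j,b)"]) auto
      next
        fix i j b k c p assume h: "x = Sub i j b k c p" "i < length cs" "(j, b) \<in> cs ! i" "k \<le> 2 * r"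
          "c < 2" "p \<le> r - 2"
        then have "j < n" using jn by blast
        then show ?thesis using h by (intro UnI2 image_eqI[where x="(i,j,b,k,c,p)"]) auto
      qed
    qed
    then show ?thesis by (rule finite_subset) auto
  qed
  define F where "F R = Max (insert 0 ((\<lambda>u. card (wreach V E R r u)) ` V))" for R
  have wc: "wcol V E r = Min (F ` total_orders_on V)" by (simp add: wcol_def F_def)
  have finT: "finite (total_orders_on V)"
    by (rule finite_subset[of _ "Pow (V \<times> V)"]) (auto simp: total_orders_on_def finV)
  obtain f :: "vtx \<Rightarrow> nat" and N where finj: "inj_on f V" using finite_imp_inj_to_nat_seg[OF finV] by blast
  define R0 where "R0 = {(x,y). x \<in> V \<and> y \<in> V \<and> f x < f y}"
  have "R0 \<in> total_orders_on V"
    unfolding total_orders_on_def strict_linear_order_on_def R0_def trans_def irrefl_on_def total_on_def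
    using finj by (auto simp: inj_on_def dest: linorder_neqE_nat)
  then have Tne: "total_orders_on V \<noteq> {}" by blast
  have "wcol V E r \<in> F ` total_orders_on V" unfolding wc by (rule Min_in) (use finT Tne in auto)
  then obtain R where RT: "R \<in> total_orders_on V" and FR: "F R = wcol V E r" by auto
  have Rsub: "R \<subseteq> V \<times> V" and slo: "strict_linear_order_on V R" using RT by (auto simp: total_orders_on_def)
  have trR: "trans R" and totR: "total_on V R" and irR: "irrefl R" using slo by (auto simp: strict_linear_order_on_def)
  have bound: "card (wreach V E R r u) \<le> 2*r - 1" if "u \<in> V" for u
  proof -
    have "card (wreach V E R r u) \<le> F R" unfolding F_def by (rule Max_ge) (use finV that in auto)
    then show ?thesis using FR assms(3) V_def E_def by simp
  qed
  have finW: "finite (wreach V E R r u)" for u by (rule finite_subset[OF _ finV]) (auto simp: wreach_def)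
  define a where "a j = ((Lit j False, Lit j True) \<in> R)" for j
  have "\<not> (\<forall>c\<in>set cs. \<exists>(j,b)\<in>c. a j = b)"
  proof
    assume "\<forall>c\<in>set cs. \<exists>(j,b)\<in>c. a j = b"
    then have "satisfiable cs" unfolding satisfiable_def by (rule exI[of _ a])
    with unsat show False by simp
  qed
  then obtain c0 where c0: "c0 \<in> set cs" and nosat0: "\<not> (\<exists>(j,b)\<in>c0. a j = b)" by blast
  then obtain i where i: "i < length cs" and nosat: "\<not> (\<exists>(j,b)\<in>cs!i. a j = b)"
    by (auto simp: in_set_conv_nth)
  define C where "C = cs ! i"
  have Cp: "finite C" "card C = r" "card (fst ` C) = r" using ex[of C] i by (auto simp: C_def)
  have LitV: "Lit j b' \<in> V" if "(j,b) \<in> C" for j b b'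
    using jn[OF i, of j b] that by (auto simp: V_def G_verts_def C_def)
  have neg: "(Lit j b, Lit j (\<not>b)) \<in> R" if "(j,b) \<in> C" for j b
  proof (cases b)
    case True
    then have "(Lit j False, Lit j True) \<notin> R" using nosat that by (auto simp: a_def C_def)
    then show ?thesis using totR LitV[OF that, of True] LitV[OF that, of False] True
      unfolding total_on_def by fastforce
  next
    case False
    then have "a j" using nosat that by (auto simp: C_def)
    then show ?thesis using False by (simp add: a_def)
  qed
  have Ppath: "is_path E (pth r i j b k c)" if "(j,b) \<in> C" "1 \<le> k" "k \<le> 2*r" "c < 2" for j b k c
    unfolding E_def by (rule pth_path) (use r3 i that in \<open>auto simp: C_def\<close>)
  have Pverts: "set (pth r i j b k c) \<subseteq> V" if "(j,b) \<in> C" "1 \<le> k" "k \<le> 2*r" "c < 2" for j b k c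
    unfolding V_def by (rule pth_verts) (use r3 i that jn in \<open>auto simp: C_def\<close>)
  define S where "S = (\<lambda>k. U i k) ` {1..2*r} \<union> (\<lambda>(j,b). Lit j b) ` C"
  have SV: "S \<subseteq> V" using i LitV by (auto simp: S_def V_def G_verts_def)
  have "finite S" using Cp by (simp add: S_def)
  moreover have "S \<noteq> {}" using r3 by (auto simp: S_def)
  ultimately have "\<exists>v\<in>S. \<forall>x\<in>S. x \<noteq> v \<longrightarrow> (x, v) \<in> R\<inverse>"
    using SV trR totR by (intro exists_max[of S V]) (auto simp: trans_on_converse total_on_converse)
  then obtain m where mS: "m \<in> S" and mmin: "\<forall>x\<in>S. x \<noteq> m \<longrightarrow> (m, x) \<in> R"
    by auto
  have mV: "m \<in> V" using mS SV by auto
  show False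
  proof (cases "m \<in> (\<lambda>k. U i k) ` {1..2*r}")
    case False
    then obtain j b where jb: "(j,b) \<in> C" and mdef: "m = Lit j b" using mS by (auto simp: S_def)
    have "\<forall>k\<in>{1..2*r}. \<exists>v. v \<in> wreach V E R r m \<and> kof v = k"
    proof
      fix k assume k: "k \<in> {1..2*r}"
      define rest where "rest = map (Sub i j b k 0) [1..<r-1] @ [U i k]"
      have P: "pth r i j b k 0 = m # rest" using pth_alt[OF r2] by (simp add: rest_def mdef)
      have restV: "set rest \<subseteq> V" using Pverts[OF jb, of k 0] k P by auto
      have "\<exists>v\<in>set rest. \<forall>x\<in>set rest. x \<noteq> v \<longrightarrow> (x,v) \<in> R"
        by (rule exists_max[OF _ _ restV trR totR]) (auto simp: rest_def)
      then obtain v where v: "v \<in> set rest" "\<forall>x\<in>set rest. x \<noteq> v \<longrightarrow> (x,v) \<in> R" by blast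
      have Ur: "U i k \<in> set rest" by (simp add: rest_def)
      have mU: "(m, U i k) \<in> R" using mmin k by (auto simp: S_def mdef)
      have mv: "(m, v) \<in> R"
      proof (cases "v = U i k")
        case True then show ?thesis using mU by simp
      next
        case False then have "(U i k, v) \<in> R" using v(2) Ur by auto
        then show ?thesis using mU trR by (meson transD)
      qed
      have pr: "is_path E (m # rest)" using Ppath[OF jb, of k 0] k P by auto
      have pv: "set (m # rest) \<subseteq> V" using Pverts[OF jb, of k 0] k P by auto
      have lr: "length rest \<le> r" using r3 by (simp add: rest_def)
      have "v \<in> wreach V E R r m"
        by (rule wreach_intro[OF slo pr pv lr v(1) v(2) mv])
      moreover have "kof v = k" using v(1) by (auto simp: rest_def)
      ultimately show "\<exists>v. v \<in> wreach V E R r m \<and> kof v = k" by blast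
    qed
    then obtain g where g: "\<forall>k\<in>{1..2*r}. g k \<in> wreach V E R r m \<and> kof (g k) = k" by metis
    have "inj_on g {1..2*r}" using g by (metis inj_onI)
    then have "card (g ` {1..2*r}) = 2*r" by (simp add: card_image)
    moreover have "g ` {1..2*r} \<subseteq> wreach V E R r m" using g by auto
    ultimately have "2*r \<le> card (wreach V E R r m)" using finW by (metis card_mono)
    then show False using bound[OF mV] r3 by simp
  next
    case True
    then obtain k where k: "k \<in> {1..2*r}" and mdef: "m = U i k" by auto
    have "\<forall>l\<in>C. \<exists>T. T \<subseteq> wreach V E R r m \<and> card T = 2 \<and> (\<forall>x\<in>T. jof x = fst l)"
    proof
      fix l assume l: "l \<in> C"
      obtain j b where ljb: "l = (j,b)" by (cases l)
      have jb: "(j,b) \<in> C" using l ljb by simp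
      define rest where "rest c = rev (map (Sub i j b k c) [1..<r-1]) @ [Lit j b]" for c
      have P: "rev (pth r i j b k c) = m # rest c" for c using pth_alt[OF r2] by (simp add: rest_def mdef)
      have mL: "(m, Lit j b) \<in> R" using mmin jb by (auto simp: S_def mdef)
      have getM: "\<exists>M\<in>set (rest c). (\<forall>x\<in>set (rest c). x \<noteq> M \<longrightarrow> (x,M) \<in> R) \<and> M \<in> wreach V E R r m"
        if c: "c < 2" for c
      proof -
        have "set (rev (pth r i j b k c)) \<subseteq> V" using Pverts[OF jb, of k c] k c by simp
        then have restV: "set (rest c) \<subseteq> V" unfolding P by simp
        have "\<exists>v\<in>set (rest c). \<forall>x\<in>set (rest c). x \<noteq> v \<longrightarrow> (x,v) \<in> R"
          by (rule exists_max[OF _ _ restV trR totR]) (auto simp: rest_def)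
        then obtain v where v: "v \<in> set (rest c)" "\<forall>x\<in>set (rest c). x \<noteq> v \<longrightarrow> (x,v) \<in> R" by blast
        have Lr: "Lit j b \<in> set (rest c)" by (simp add: rest_def)
        have mv: "(m, v) \<in> R"
        proof (cases "v = Lit j b")
          case True then show ?thesis using mL by simp
        next
          case False then have "(Lit j b, v) \<in> R" using v(2) Lr by auto
          then show ?thesis using mL trR by (meson transD)
        qed
        have pr: "is_path E (m # rest c)" using is_path_rev[OF Ppath[OF jb, of k c] symE] k c P[of c] by auto
        have pv: "set (m # rest c) \<subseteq> V" using restV mV by simp
        have lr: "length (rest c) \<le> r" using r3 by (simp add: rest_def)
        have "v \<in> wreach V E R r m"
          by (rule wreach_intro[OF slo pr pv lr v(1) v(2) mv])
        then show ?thesis using v by blast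
      qed
      obtain M0 where M0: "M0 \<in> set (rest 0)" "\<forall>x\<in>set (rest 0). x \<noteq> M0 \<longrightarrow> (x,M0) \<in> R" "M0 \<in> wreach V E R r m"
        using getM[of 0] by auto
      obtain M1 where M1: "M1 \<in> set (rest 1)" "M1 \<in> wreach V E R r m"
        using getM[of 1] by auto
      have jM0: "jof M0 = j" using M0(1) by (auto simp: rest_def)
      have jM1: "jof M1 = j" using M1(1) by (auto simp: rest_def)
      show "\<exists>T. T \<subseteq> wreach V E R r m \<and> card T = 2 \<and> (\<forall>x\<in>T. jof x = fst l)"
      proof (cases "M0 = M1")
        case False
        then show ?thesis using M0 M1 jM0 jM1 ljb by (intro exI[of _ "{M0, M1}"]) auto
      next
        case True
        then have M0L: "M0 = Lit j b" using M0(1) M1(1) by (auto simp: rest_def)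
        let ?w = "Lit j (\<not>b)"
        have pr: "is_path E (m # rest 0)" using is_path_rev[OF Ppath[OF jb, of k 0] symE] k P[of 0] by auto
        have "set (rev (pth r i j b k 0)) \<subseteq> V" using Pverts[OF jb, of k 0] k by simp
        then have pv: "set (m # rest 0) \<subseteq> V" unfolding P by simp
        have wn: "?w \<notin> set (m # rest 0)" by (auto simp: rest_def mdef)
        have lastL: "last (m # rest 0) = Lit j b" by (simp add: rest_def)
        have jn': "j < n" using jn[OF i, of j b] jb by (simp add: C_def)
        have eLw: "E (Lit j b) ?w"
          using jn' by (cases b) (auto simp: E_def G_adj_def G_edges_def)
        have pr2: "is_path E (m # (rest 0 @ [?w]))"
          using is_path_snoc[OF pr wn] eLw lastL by simp
        have pv2: "set (m # (rest 0 @ [?w])) \<subseteq> V" using pv LitV[OF jb] by auto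
        have Lw: "(Lit j b, ?w) \<in> R" using neg[OF jb] .
        have maxw: "\<forall>x\<in>set (rest 0 @ [?w]). x \<noteq> ?w \<longrightarrow> (x, ?w) \<in> R"
        proof (intro ballI impI)
          fix x assume "x \<in> set (rest 0 @ [?w])" "x \<noteq> ?w"
          then have x: "x \<in> set (rest 0)" by auto
          show "(x, ?w) \<in> R"
          proof (cases "x = Lit j b")
            case True then show ?thesis using Lw by simp
          next
            case False then have "(x, Lit j b) \<in> R" using M0(2) x M0L by auto
            then show ?thesis using Lw trR by (meson transD)
          qed
        qed
        have mw: "(m, ?w) \<in> R" using mL Lw trR by (meson transD)
        have lr: "length (rest 0 @ [?w]) \<le> r" using r3 by (simp add: rest_def)
        have "?w \<in> wreach V E R r m"
          by (rule wreach_intro[OF slo pr2 pv2 lr _ maxw mw]) simp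
        then show ?thesis using M0(3) M0L ljb by (intro exI[of _ "{Lit j b, ?w}"]) auto
      qed
    qed
    then obtain T where T: "\<forall>l\<in>C. T l \<subseteq> wreach V E R r m \<and> card (T l) = 2 \<and> (\<forall>x\<in>T l. jof x = fst l)"
      by metis
    have injf: "inj_on fst C" using Cp by (intro eq_card_imp_inj_on) auto
    have "card (\<Union>(T ` C)) = (\<Sum>l\<in>C. card (T l))"
    proof (rule card_UN_disjoint)
      show "finite C" using Cp by simp
      show "\<forall>l\<in>C. finite (T l)" using T by (metis card.infinite zero_neq_numeral)
      show "\<forall>l\<in>C. \<forall>l'\<in>C. l \<noteq> l' \<longrightarrow> T l \<inter> T l' = {}"
      proof (intro ballI impI)
        fix l l' assume "l \<in> C" "l' \<in> C" "l \<noteq> l'"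
        then have "fst l \<noteq> fst l'" using injf by (meson inj_onD)
        moreover have "\<forall>x\<in>T l. jof x = fst l" "\<forall>x\<in>T l'. jof x = fst l'" using T \<open>l \<in> C\<close> \<open>l' \<in> C\<close> by auto
        ultimately show "T l \<inter> T l' = {}" by (metis disjoint_iff)
      qed
    qed
    also have "\<dots> = 2 * r" using T Cp by simp
    finally have "card (\<Union>(T ` C)) = 2 * r" .
    moreover have "\<Union>(T ` C) \<subseteq> wreach V E R r m" using T by auto
    ultimately have "2*r \<le> card (wreach V E R r m)" using finW by (metis card_mono)
    then show False using bound[OF mV] r3 by simp
  qed
qed

end
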